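(* Let $C$ be a cycle of goods, $N=\{1,2,3\}$ a set of agents with utility functions $u_1,u_2,u_3$ on $C$, and $c$ a real number with $0<c\le1$. Suppose that for two different agents $i,j\in N$ there is a bundle $A$ of some $\mathrm{mms}(i)$-split and a bundle $B$ of some $\mathrm{mms}(j)$-split of $C$ such that $u_i(A\cap B)\ge c\cdot\mathrm{mms}(i)$. Then there exists a $c$-sufficient allocation of the goods of $C$ to the agents in $N$.
   Context: A cycle of goods has goods $v_1,\dots,v_m$ with edges $v_iv_{i+1}$ and $v_mv_1$. A utility function assigns a non-negative real to each good, extended additively to sets. A bundle is a set of goods inducing a connected subgraph (empty allowed); a $3$-split is a sequence of $3$ pairwise disjoint bundles (possibly empty) with union all goods. $\mathrm{mms}(i)=\mathrm{mms}^{(3)}(C,u_i)=\max_{P_1,P_2,P_3}\min_k u_i(P_k)$ over all $3$-splits; an $\mathrm{mms}(i)$-split is a $3$-split attaining this maximum for $u_i$. An allocation is a $3$-split $P_1,P_2,P_3$ with $P_k$ given to agent $k$; it is $c$-sufficient if $u_k(P_k)\ge c\cdot\mathrm{mms}(k)$ for $k=1,2,3$. *)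

theory Defs
  imports Complex_Main
begin

definition cyc_adj :: "nat \<Rightarrow> nat \<Rightarrow> nat \<Rightarrow> bool" where
  "cyc_adj m x y \<longleftrightarrow> y = Suc x mod m \<or> x = Suc y mod m"

text \<open>A bundle: a set of goods inducing a connected subgraph (empty allowed).\<close>
definition is_bundle :: "nat \<Rightarrow> nat set \<Rightarrow> bool" where
  "is_bundle m S \<longleftrightarrow> S \<subseteq> {0..<m} \<and>
     (\<forall>x\<in>S. \<forall>y\<in>S. (x, y) \<in> rtrancl {(a, b). a \<in> S \<and> b \<in> S \<and> cyc_adj m a b})"

definition uset :: "(nat \<Rightarrow> real) \<Rightarrow> nat set \<Rightarrow> real" where
  "uset u S = (\<Sum>g\<in>S. u g)"

definition split3 :: "nat \<Rightarrow> (nat \<Rightarrow> nat set) \<Rightarrow> bool" where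
  "split3 m P \<longleftrightarrow> (\<forall>k\<in>{1,2,3}. is_bundle m (P k)) \<and>
     (\<forall>k\<in>{1,2,3}. \<forall>l\<in>{1,2,3}. k \<noteq> l \<longrightarrow> P k \<inter> P l = {}) \<and>
     (\<Union>k\<in>{1,2,3}. P k) = {0..<m}"

definition split_value :: "(nat \<Rightarrow> real) \<Rightarrow> (nat \<Rightarrow> nat set) \<Rightarrow> real" where
  "split_value u P = Min ((\<lambda>k. uset u (P k)) ` {1,2,3})"

definition mms :: "nat \<Rightarrow> (nat \<Rightarrow> real) \<Rightarrow> real" where
  "mms m u = Sup {split_value u P | P. split3 m P}"

definition mms_split :: "nat \<Rightarrow> (nat \<Rightarrow> real) \<Rightarrow> (nat \<Rightarrow> nat set) \<Rightarrow> bool" where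
  "mms_split m u P \<longleftrightarrow> split3 m P \<and> split_value u P = mms m u"

definition sufficient_alloc :: "nat \<Rightarrow> (nat \<Rightarrow> nat \<Rightarrow> real) \<Rightarrow> real \<Rightarrow> (nat \<Rightarrow> nat set) \<Rightarrow> bool" where
  "sufficient_alloc m u c P \<longleftrightarrow> split3 m P \<and>
     (\<forall>k\<in>{1,2,3}. uset (u k) (P k) \<ge> c * mms m (u k))"

end

theory Submission
  imports Defs
begin


definition elem :: "nat \<Rightarrow> nat \<Rightarrow> nat \<Rightarrow> nat" where
  "elem m r t = (r + t) mod m"
definition seg :: "nat \<Rightarrow> nat \<Rightarrow> nat \<Rightarrow> nat \<Rightarrow> nat set" where
  "seg m r A B = elem m r ` {A..<B}"
definition Fv :: "nat \<Rightarrow> (nat \<Rightarrow> real) \<Rightarrow> nat \<Rightarrow> nat \<Rightarrow> nat \<Rightarrow> real" where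
  "Fv m w r A B = (\<Sum>t\<in>{A..<B}. w (elem m r t))"

lemma elem_lt: "0 < m \<Longrightarrow> elem m r t < m"
  by (simp add: elem_def)

lemma elem_inj:
  assumes "0 < m" "A \<le> t1" "t1 < A + m" "A \<le> t2" "t2 < A + m" "elem m r t1 = elem m r t2"
  shows "t1 = t2"
proof -
  have key: "\<And>x y. A \<le> x \<Longrightarrow> x \<le> y \<Longrightarrow> y < A + m \<Longrightarrow> (r + x) mod m = (r + y) mod m \<Longrightarrow> x = y"
  proof -
    fix x y assume h: "A \<le> x" "x \<le> y" "y < A + m" "(r + x) mod m = (r + y) mod m"
    have "m dvd (r + y) - (r + x)" using h(2) h(4) mod_eq_dvd_iff_nat[of "r+x" "r+y" m] by simp
    hence "m dvd y - x" by simp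
    moreover have "y - x < m" using h by linarith
    ultimately have "y - x = 0" using dvd_imp_le by (metis gr0I not_le)
    thus "x = y" using h(2) by simp
  qed
  show ?thesis using assms key[of t1 t2] key[of t2 t1] unfolding elem_def by (cases "t1 \<le> t2") auto
qed

lemma elem_inj_on: "0 < m \<Longrightarrow> inj_on (elem m r) {A..<A+m}"
  by (auto simp: inj_on_def intro: elem_inj)

lemma elem_shift: "elem m r (t + m) = elem m r t"
  by (simp add: elem_def add.assoc[symmetric])

lemma elem_Suc: "elem m r (Suc t) = Suc (elem m r t) mod m"
  by (simp add: elem_def mod_Suc_eq)

lemma uset_seg:
  assumes "0 < m" "B \<le> A + m"
  shows "uset w (seg m r A B) = Fv m w r A B"
proof -
  have "inj_on (elem m r) {A..<B}"
    by (rule inj_on_subset[OF elem_inj_on[OF assms(1), of r A]]) (use assms(2) in auto)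
  thus ?thesis unfolding uset_def seg_def Fv_def by (simp add: sum.reindex)
qed

lemma seg_full:
  assumes "0 < m" shows "seg m r A (A + m) = {0..<m}"
proof -
  have sub: "seg m r A (A + m) \<subseteq> {0..<m}" using assms by (auto simp: seg_def elem_lt)
  have "card (seg m r A (A + m)) = m"
    unfolding seg_def using card_image[OF elem_inj_on[OF assms]] by simp
  thus ?thesis using sub by (simp add: card_subset_eq)
qed

lemma seg_sub: "0 < m \<Longrightarrow> seg m r A B \<subseteq> {0..<m}"
  by (auto simp: seg_def elem_lt)

lemma cyc_adj_sym: "cyc_adj m x y = cyc_adj m y x"
  by (auto simp: cyc_adj_def)

lemma seg_bundle:
  assumes "0 < m" shows "is_bundle m (seg m r A B)"
proof -
  let ?S = "seg m r A B"
  let ?R = "{(a, b). a \<in> ?S \<and> b \<in> ?S \<and> cyc_adj m a b}"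
  have fwd: "(elem m r t1, elem m r t2) \<in> ?R\<^sup>*" if "A \<le> t1" "t1 \<le> t2" "t2 < B" for t1 t2
    using that
  proof (induction t2)
    case 0 thus ?case by simp
  next
    case (Suc n)
    show ?case
    proof (cases "t1 = Suc n")
      case True thus ?thesis by simp
    next
      case False
      hence IH: "(elem m r t1, elem m r n) \<in> ?R\<^sup>*" using Suc by simp
      have m1: "elem m r n \<in> ?S" using Suc False unfolding seg_def by auto
      have m2: "elem m r (Suc n) \<in> ?S" using Suc False unfolding seg_def by auto
      have "cyc_adj m (elem m r n) (elem m r (Suc n))" by (simp add: cyc_adj_def elem_Suc)
      hence "(elem m r n, elem m r (Suc n)) \<in> ?R" using m1 m2 by simp
      thus ?thesis by (rule rtrancl_into_rtrancl[OF IH])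
    qed
  qed
  have symR: "?R\<inverse> = ?R" using cyc_adj_sym by auto
  have "(x, y) \<in> ?R\<^sup>*" if xs: "x \<in> ?S" and ys: "y \<in> ?S" for x y
  proof -
    obtain t1 where x: "x = elem m r t1" "A \<le> t1" "t1 < B"
      using xs unfolding seg_def by auto
    obtain t2 where y: "y = elem m r t2" "A \<le> t2" "t2 < B"
      using ys unfolding seg_def by auto
    show ?thesis
    proof (cases "t1 \<le> t2")
      case True thus ?thesis using fwd x y by simp
    next
      case False
      hence "(y, x) \<in> ?R\<^sup>*" using fwd x y by simp
      hence "(x, y) \<in> (?R\<inverse>)\<^sup>*" by (simp add: rtrancl_converse)
      thus ?thesis using symR by simp
    qed
  qed
  thus ?thesis unfolding is_bundle_def using seg_sub[OF assms] by blast
qed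



lemma Fv_add: "A \<le> B \<Longrightarrow> B \<le> C \<Longrightarrow> Fv m w r A B + Fv m w r B C = Fv m w r A C"
  unfolding Fv_def by (rule sum.atLeastLessThan_concat)

lemma Fv_shift: "Fv m w r (A + m) (B + m) = Fv m w r A B"
  unfolding Fv_def by (simp add: sum.shift_bounds_nat_ivl elem_shift)

lemma Fv_mono:
  assumes "0 < m" "\<forall>g<m. w g \<ge> 0" "A' \<le> A" "B \<le> B'"
  shows "Fv m w r A B \<le> Fv m w r A' B'"
  unfolding Fv_def
  by (rule sum_mono2) (use assms elem_lt in auto)

lemma Fv_nonneg:
  assumes "0 < m" "\<forall>g<m. w g \<ge> 0"
  shows "0 \<le> Fv m w r A B"
  unfolding Fv_def by (rule sum_nonneg) (use assms elem_lt in auto)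

lemma Fv_total: "0 < m \<Longrightarrow> Fv m w r A (A + m) = uset w {0..<m}"
  using uset_seg[of m "A + m" A w r] seg_full[of m r A] by simp

lemma seg_disj:
  assumes "0 < m" "A \<le> B" "B \<le> C" "C \<le> D" "D \<le> A + m"
  shows "seg m r A B \<inter> seg m r C D = {}"
proof (rule ccontr)
  assume "seg m r A B \<inter> seg m r C D \<noteq> {}"
  then obtain t1 t2 where "A \<le> t1" "t1 < B" "C \<le> t2" "t2 < D" "elem m r t1 = elem m r t2"
    unfolding seg_def by auto
  moreover have "t1 = t2" using elem_inj[OF assms(1), of A t1 t2 r] calculation assms by linarith
  ultimately show False using assms by linarith
qed

lemma seg_union:
  assumes "A \<le> B" "B \<le> C"
  shows "seg m r A B \<union> seg m r B C = seg m r A C"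
  unfolding seg_def using assms by (simp add: image_Un[symmetric] ivl_disj_un)

lemma split3_alloc:
  assumes "is_bundle m X" "is_bundle m Y" "is_bundle m Z"
    "X \<inter> Y = {}" "X \<inter> Z = {}" "Y \<inter> Z = {}" "X \<union> Y \<union> Z = {0..<m}"
    "i \<in> {1,2,3}" "j \<in> {1,2,3}" "k \<in> {1,2,3}" "i \<noteq> j" "i \<noteq> k" "j \<noteq> k"
  shows "split3 m (\<lambda>n. if n = i then X else if n = j then Y else Z)"
  using assms unfolding split3_def
  by (auto simp: Int_commute)

lemma alloc_segs:
  fixes u :: "nat \<Rightarrow> nat \<Rightarrow> real"
  assumes m: "0 < m" and p: "p1 \<in> {1,2,3}" "p2 \<in> {1,2,3}" "p3 \<in> {1,2,3}" "p1 \<noteq> p2" "p1 \<noteq> p3" "p2 \<noteq> p3"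
    and o: "A \<le> B" "B \<le> C" "C \<le> A + m"
    and v: "Fv m (u p1) s A B \<ge> v1" "Fv m (u p2) s B C \<ge> v2" "Fv m (u p3) s C (A + m) \<ge> v3"
  shows "\<exists>X. split3 m X \<and> uset (u p1) (X p1) \<ge> v1 \<and> uset (u p2) (X p2) \<ge> v2 \<and> uset (u p3) (X p3) \<ge> v3"
proof -
  let ?X = "seg m s A B" and ?Y = "seg m s B C" and ?Z = "seg m s C (A + m)"
  have sp: "split3 m (\<lambda>n. if n = p1 then ?X else if n = p2 then ?Y else ?Z)"
  proof (rule split3_alloc[OF seg_bundle[OF m] seg_bundle[OF m] seg_bundle[OF m] _ _ _ _ p])
    show "?X \<inter> ?Y = {}" by (rule seg_disj) (use m o in auto)
    show "?X \<inter> ?Z = {}" by (rule seg_disj) (use m o in auto)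
    show "?Y \<inter> ?Z = {}" by (rule seg_disj) (use m o in auto)
    show "?X \<union> ?Y \<union> ?Z = {0..<m}"
      using seg_union[OF o(1) o(2)] seg_union[of A C "A + m"] o seg_full[OF m] by simp
  qed
  have "uset (u p1) ?X = Fv m (u p1) s A B" by (rule uset_seg) (use m o in auto)
  moreover have "uset (u p2) ?Y = Fv m (u p2) s B C" by (rule uset_seg) (use m o in auto)
  moreover have "uset (u p3) ?Z = Fv m (u p3) s C (A + m)" by (rule uset_seg) (use m o in auto)
  ultimately show ?thesis using sp v p by (intro exI[of _ "\<lambda>n. if n = p1 then ?X else if n = p2 then ?Y else ?Z"]) auto
qed



lemma main_alloc:
  fixes u :: "nat \<Rightarrow> nat \<Rightarrow> real"
  assumes m: "0 < m"
    and ijk: "i \<in> {1,2,3}" "j \<in> {1,2,3}" "k \<in> {1,2,3}" "i \<noteq> j" "i \<noteq> k" "j \<noteq> k"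
    and nn: "\<forall>n\<in>{1,2,3}. \<forall>g<m. u n g \<ge> 0"
    and o: "\<alpha> \<le> \<beta>" "\<beta> \<le> e" "e \<le> f" "f \<le> m" "\<beta> \<le> \<gamma>" "\<gamma> \<le> m + \<alpha>"
    and Hi: "Fv m (u i) s \<alpha> \<beta> \<ge> c * Mi"
    and Hj1: "Fv m (u j) s e f \<ge> c * Mj" and Hj2: "Fv m (u j) s f m \<ge> c * Mj"
    and Hk: "Fv m (u k) s \<alpha> (\<alpha> + m) \<ge> 3 * Mk" "Mk \<ge> 0" "c \<le> 1"
    and Hg: "(f \<le> \<gamma> \<and> Fv m (u i) s \<gamma> (m + \<alpha>) \<ge> c * Mi) \<or> (\<gamma> \<le> f \<and> Fv m (u i) s \<beta> \<gamma> \<ge> c * Mi)"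
  shows "\<exists>X. split3 m X \<and> uset (u i) (X i) \<ge> c * Mi \<and> uset (u j) (X j) \<ge> c * Mj \<and> uset (u k) (X k) \<ge> c * Mk"
proof -
  have nj: "\<forall>g<m. u j g \<ge> 0" and nk: "\<forall>g<m. u k g \<ge> 0" and ni: "\<forall>g<m. u i g \<ge> 0" using nn ijk by auto
  have j1: "Fv m (u j) s \<beta> f \<ge> c * Mj" using Fv_mono[OF m nj, of \<beta> e f f s] o Hj1 by linarith
  have j2: "Fv m (u j) s f (\<alpha> + m) \<ge> c * Mj" using Fv_mono[OF m nj, of f f m "\<alpha> + m" s] o Hj2 by linarith
  have ksum: "Fv m (u k) s \<alpha> \<beta> + Fv m (u k) s \<beta> f + Fv m (u k) s f (\<alpha> + m) = Fv m (u k) s \<alpha> (\<alpha> + m)"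
    using Fv_add[of \<alpha> \<beta> f] Fv_add[of \<alpha> f "\<alpha> + m"] o by simp
  have cM: "c * Mk \<le> Mk" using mult_right_mono[OF Hk(3) Hk(2)] by simp
  consider (K2) "Fv m (u k) s \<beta> f \<ge> c * Mk" | (K3) "Fv m (u k) s f (\<alpha> + m) \<ge> c * Mk"
    | (K1) "Fv m (u k) s \<alpha> \<beta> \<ge> c * Mk"
    using ksum Hk(1) cM by linarith
  thus ?thesis
  proof cases
    case K2
    obtain X where "split3 m X \<and> uset (u i) (X i) \<ge> c * Mi \<and> uset (u k) (X k) \<ge> c * Mk \<and> uset (u j) (X j) \<ge> c * Mj"
      using alloc_segs[OF m ijk(1) ijk(3) ijk(2) ijk(5) ijk(4) ijk(6)[symmetric], where A=\<alpha> and B=\<beta> and C=f and u=u and s=s] o Hi K2 j2 by force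
    thus ?thesis by blast
  next
    case K3
    obtain X where "split3 m X \<and> uset (u i) (X i) \<ge> c * Mi \<and> uset (u j) (X j) \<ge> c * Mj \<and> uset (u k) (X k) \<ge> c * Mk"
      using alloc_segs[OF m ijk(1) ijk(2) ijk(3) ijk(4) ijk(5) ijk(6), where A=\<alpha> and B=\<beta> and C=f and u=u and s=s] o Hi K3 j1 by force
    thus ?thesis by blast
  next
    case K1
    from Hg show ?thesis
    proof
      assume h: "f \<le> \<gamma> \<and> Fv m (u i) s \<gamma> (m + \<alpha>) \<ge> c * Mi"
      have jj: "Fv m (u j) s \<beta> \<gamma> \<ge> c * Mj" using Fv_mono[OF m nj, of \<beta> e f \<gamma> s] o Hj1 h by linarith
      obtain X where "split3 m X \<and> uset (u k) (X k) \<ge> c * Mk \<and> uset (u j) (X j) \<ge> c * Mj \<and> uset (u i) (X i) \<ge> c * Mi"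
        using alloc_segs[OF m ijk(3) ijk(2) ijk(1) ijk(6)[symmetric] ijk(5)[symmetric] ijk(4)[symmetric], where A=\<alpha> and B=\<beta> and C=\<gamma> and u=u and s=s] o K1 jj h
        by (force simp: add.commute)
      thus ?thesis by blast
    next
      assume h: "\<gamma> \<le> f \<and> Fv m (u i) s \<beta> \<gamma> \<ge> c * Mi"
      have jj: "Fv m (u j) s \<gamma> (\<alpha> + m) \<ge> c * Mj" using Fv_mono[OF m nj, of \<gamma> f m "\<alpha> + m" s] o Hj2 h by linarith
      obtain X where "split3 m X \<and> uset (u k) (X k) \<ge> c * Mk \<and> uset (u i) (X i) \<ge> c * Mi \<and> uset (u j) (X j) \<ge> c * Mj"
        using alloc_segs[OF m ijk(3) ijk(1) ijk(2) ijk(5)[symmetric] ijk(6)[symmetric] ijk(4), where A=\<alpha> and B=\<beta> and C=\<gamma> and u=u and s=s] o K1 jj h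
        by (force simp: add.commute)
      thus ?thesis by blast
    qed
  qed
qed



definition pos :: "nat \<Rightarrow> nat \<Rightarrow> nat \<Rightarrow> nat" where
  "pos m r x = (x + m - r mod m) mod m"

lemma elem_pos: "x < m \<Longrightarrow> elem m r (pos m r x) = x"
proof -
  assume x: "x < m"
  have "elem m r (pos m r x) = (r mod m + (x + m - r mod m) mod m) mod m"
    unfolding elem_def pos_def by (simp add: mod_add_left_eq)
  also have "\<dots> = (r mod m + (x + m - r mod m)) mod m" by (simp add: mod_add_right_eq)
  also have "\<dots> = (x + m) mod m"
  proof -
    have "r mod m < m" using x by simp
    hence "r mod m + (x + m - r mod m) = x + m" by linarith
    thus ?thesis by simp
  qed
  also have "\<dots> = x" using x by simp
  finally show ?thesis .
qed

lemma pos_lt: "0 < m \<Longrightarrow> pos m r x < m"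
  by (simp add: pos_def)

lemma pos_elem: "t < m \<Longrightarrow> pos m r (elem m r t) = t"
proof -
  assume t: "t < m"
  hence m: "0 < m" by simp
  have "elem m r (pos m r (elem m r t)) = elem m r t"
    using elem_pos[OF elem_lt[OF m]] by simp
  thus ?thesis using elem_inj[OF m, of 0 "pos m r (elem m r t)" t r] pos_lt[OF m] t by simp
qed

lemma seg_shift1: "seg m (Suc r) A B = seg m r (Suc A) (Suc B)"
proof -
  have e: "elem m (Suc r) t = elem m r (Suc t)" for t by (simp add: elem_def)
  have "seg m r (Suc A) (Suc B) = elem m r ` (Suc ` {A..<B})" unfolding seg_def by simp
  also have "\<dots> = (\<lambda>t. elem m r (Suc t)) ` {A..<B}" by (rule image_image)
  also have "\<dots> = seg m (Suc r) A B" unfolding seg_def e by simp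
  finally show ?thesis by simp
qed

lemma bundle_interval:
  assumes m: "0 < m" and b: "is_bundle m S" and ex: "elem m r (m - 1) \<notin> S"
  shows "\<exists>A B. A \<le> B \<and> B < m \<and> S = seg m r A B"
proof (cases "S = {}")
  case True thus ?thesis by (intro exI[of _ 0]) (auto simp: seg_def m)
next
  case False
  let ?R = "{(a, b). a \<in> S \<and> b \<in> S \<and> cyc_adj m a b}"
  have Ssub: "S \<subseteq> {0..<m}" using b by (simp add: is_bundle_def)
  have posS: "pos m r x < m - 1" if "x \<in> S" for x
  proof -
    have "x < m" using that Ssub by auto
    hence "elem m r (pos m r x) = x" by (rule elem_pos)
    moreover have "pos m r x < m" using pos_lt[OF m] .
    ultimately show ?thesis using that ex by (cases "pos m r x = m - 1") auto
  qed
  have adjstep: "pos m r y = Suc (pos m r x) \<or> pos m r x = Suc (pos m r y)" if "(x, y) \<in> ?R" for x y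
  proof -
    have xy: "x \<in> S" "y \<in> S" "y = Suc x mod m \<or> x = Suc y mod m" using that by (auto simp: cyc_adj_def)
    have xm: "x < m" "y < m" using xy Ssub by auto
    have gen: "pos m r b = Suc (pos m r a)" if "a \<in> S" "b = Suc a mod m" for a b
    proof -
      have am: "a < m" using that Ssub by auto
      have "elem m r (Suc (pos m r a)) = Suc a mod m" using elem_Suc elem_pos[OF am] by simp
      hence "pos m r b = pos m r (elem m r (Suc (pos m r a)))" using that by simp
      also have "\<dots> = Suc (pos m r a)" using posS[OF that(1)] by (intro pos_elem) simp
      finally show ?thesis .
    qed
    show ?thesis using xy gen by blast
  qed
  have conv: "elem m r t \<in> S" if "a \<in> S" "(a, b) \<in> ?R\<^sup>*"
      "min (pos m r a) (pos m r b) \<le> t" "t \<le> max (pos m r a) (pos m r b)" for a b t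
    using that(2,3,4)
  proof (induction b arbitrary: t rule: rtrancl_induct)
    case base
    hence "t = pos m r a" by simp
    thus ?case using elem_pos[of a m r] that(1) Ssub by auto
  next
    case (step y z)
    have zS: "z \<in> S" using step by auto
    show ?case
    proof (cases "t = pos m r z")
      case True thus ?thesis using elem_pos[of z m r] zS Ssub by auto
    next
      case False
      have "pos m r z = Suc (pos m r y) \<or> pos m r y = Suc (pos m r z)" by (rule adjstep[OF step.hyps(2)])
      hence "min (pos m r a) (pos m r y) \<le> t \<and> t \<le> max (pos m r a) (pos m r y)"
        using step.prems False by auto
      thus ?thesis using step.IH by blast
    qed
  qed
  let ?PS = "pos m r ` S"
  have finS: "finite ?PS" using Ssub finite_subset by blast
  have neS: "?PS \<noteq> {}" using False by simp
  obtain a where aS: "a \<in> S" and amin: "pos m r a = Min ?PS" using Min_in[OF finS neS] by auto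
  obtain b where bS: "b \<in> S" and bmax: "pos m r b = Max ?PS" using Max_in[OF finS neS] by auto
  have ab: "(a, b) \<in> ?R\<^sup>*" using b aS bS by (simp add: is_bundle_def)
  have le: "pos m r a \<le> pos m r b" using amin bmax finS neS by (simp add: Min_le_iff)
  have "S = seg m r (pos m r a) (Suc (pos m r b))"
  proof
    show "S \<subseteq> seg m r (pos m r a) (Suc (pos m r b))"
    proof
      fix x assume xS: "x \<in> S"
      have "pos m r a \<le> pos m r x" using amin finS xS by simp
      moreover have "pos m r x \<le> pos m r b" using bmax finS xS by simp
      moreover have "x = elem m r (pos m r x)" using elem_pos[of x m r] xS Ssub by auto
      ultimately show "x \<in> seg m r (pos m r a) (Suc (pos m r b))" unfolding seg_def by auto
    qed
  next
    show "seg m r (pos m r a) (Suc (pos m r b)) \<subseteq> S"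
      unfolding seg_def using conv[OF aS ab] le by auto
  qed
  moreover have "Suc (pos m r b) < m" using posS[OF bS] by simp
  ultimately show ?thesis using le by (intro exI[of _ "pos m r a"] exI[of _ "Suc (pos m r b)"]) simp
qed

lemma exists_start:
  fixes m :: nat
  assumes m: "0 < m" and sub: "S \<subseteq> {0..<m}" and ne: "S \<noteq> {}" and nf: "\<not> {0..<m} \<subseteq> S"
  shows "\<exists>g\<in>S. (g + m - 1) mod m \<notin> S"
proof (rule ccontr)
  assume "\<not> ?thesis"
  hence cl: "\<And>g. g \<in> S \<Longrightarrow> (g + m - 1) mod m \<in> S" by blast
  obtain g0 where g0: "g0 \<in> S" using ne by auto
  have g0m: "g0 < m" using g0 sub by auto
  have down: "x - n \<in> S" if "x \<in> S" for x n
    using that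
  proof (induction n)
    case 0 thus ?case by simp
  next
    case (Suc n)
    hence h: "x - n \<in> S" by simp
    show ?case
    proof (cases "x - n = 0")
      case True thus ?thesis using h by simp
    next
      case False
      have "x - n < m" using h sub by auto
      have e: "x - n + m - 1 = (x - Suc n) + m" using False by arith
      have f: "((x - Suc n) + m) mod m = x - Suc n" using \<open>x - n < m\<close> by simp
      have "(x - n + m - 1) mod m = x - Suc n" unfolding e by (rule f)
      thus ?thesis using cl[OF h] by simp
    qed
  qed
  have "0 \<in> S" using down[OF g0, of g0] by simp
  hence "(0 + m - 1) mod m \<in> S" by (rule cl)
  hence top: "m - 1 \<in> S" using m by simp
  have "{0..<m} \<subseteq> S"
  proof
    fix x assume "x \<in> {0..<m}"
    hence "x = (m - 1) - (m - 1 - x)" by auto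
    thus "x \<in> S" using down[OF top, of "m - 1 - x"] by simp
  qed
  thus False using nf by simp
qed



lemma ivl2:
  fixes x m p1 p2 q1 q2 :: nat
  assumes U: "\<And>t. (p1 \<le> t \<and> t < p2) \<or> (q1 \<le> t \<and> t < q2) \<longleftrightarrow> (x \<le> t \<and> t < m)"
    and D: "\<And>t. \<not> ((p1 \<le> t \<and> t < p2) \<and> (q1 \<le> t \<and> t < q2))"
    and ne: "p1 < p2" "q1 < q2" and ord: "p2 \<le> q1"
  shows "p1 = x \<and> q1 = p2 \<and> q2 = m"
proof -
  have a: "x \<le> p1" "p1 < m" using U[of p1] ne by auto
  have b: "q2 - 1 < m" using U[of "q2 - 1"] ne by auto
  have c: "p1 \<le> x" using U[of x] a ord ne by auto
  have d: "q1 \<le> p2" using U[of p2] ord ne a b c by auto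
  have e: "m \<le> q2" using U[of q2] ord ne a c d by (cases "q2 < m") auto
  show ?thesis using a b c d e ord by linarith
qed

lemma ivl3:
  fixes x m p1 p2 q1 q2 :: nat
  assumes U: "{p1..<p2} \<union> {q1..<q2} = {x..<m}" and D: "{p1..<p2} \<inter> {q1..<q2} = {}" and xm: "x \<le> m"
  shows "\<exists>y. x \<le> y \<and> y \<le> m \<and> (({p1..<p2} = {x..<y} \<and> {q1..<q2} = {y..<m}) \<or> ({q1..<q2} = {x..<y} \<and> {p1..<p2} = {y..<m}))"
proof -
  have U': "\<And>t. (p1 \<le> t \<and> t < p2) \<or> (q1 \<le> t \<and> t < q2) \<longleftrightarrow> (x \<le> t \<and> t < m)"
    using U by (auto simp: set_eq_iff)
  have D': "\<And>t. \<not> ((p1 \<le> t \<and> t < p2) \<and> (q1 \<le> t \<and> t < q2))" using D by (auto simp: set_eq_iff)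
  have D'': "\<And>t. \<not> ((q1 \<le> t \<and> t < q2) \<and> (p1 \<le> t \<and> t < p2))" using D' by blast
  have U'': "\<And>t. (q1 \<le> t \<and> t < q2) \<or> (p1 \<le> t \<and> t < p2) \<longleftrightarrow> (x \<le> t \<and> t < m)" using U' by blast
  show ?thesis
  proof (cases "p2 \<le> p1")
    case True
    hence "{p1..<p2} = {}" by simp
    thus ?thesis using U xm by (intro exI[of _ x]) auto
  next
    case F1: False
    show ?thesis
    proof (cases "q2 \<le> q1")
      case True
      hence "{q1..<q2} = {}" by simp
      thus ?thesis using U xm by (intro exI[of _ x]) auto
    next
      case F2: False
      have "p2 \<le> q1 \<or> q2 \<le> p1" using D'[of "max p1 q1"] F1 F2 by auto
      thus ?thesis
      proof
        assume "p2 \<le> q1"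
        from ivl2[OF U' D' _ _ this] F1 F2 have "p1 = x \<and> q1 = p2 \<and> q2 = m" by simp
        thus ?thesis using F1 F2 by (intro exI[of _ p2]) auto
      next
        assume "q2 \<le> p1"
        from ivl2[OF U'' D'' _ _ this] F1 F2 have "q1 = x \<and> p1 = q2 \<and> p2 = m" by simp
        thus ?thesis using F1 F2 by (intro exI[of _ q2]) auto
      qed
    qed
  qed
qed


lemma seg_empty_iff: "seg m r A B = {} \<longleftrightarrow> B \<le> A"
  by (simp add: seg_def not_less)

lemma split3_facts:
  assumes "split3 m P" "h \<in> {1,2,3}" "p \<in> {1,2,3}" "q \<in> {1,2,3}" "h \<noteq> p" "h \<noteq> q" "p \<noteq> q"
  shows "is_bundle m (P h)" "is_bundle m (P p)" "is_bundle m (P q)"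
    "P h \<inter> P p = {}" "P h \<inter> P q = {}" "P p \<inter> P q = {}" "P h \<union> P p \<union> P q = {0..<m}"
proof -
  have b: "\<forall>k\<in>{1,2,3}. is_bundle m (P k)" and d: "\<forall>k\<in>{1,2,3}. \<forall>l\<in>{1,2,3}. k \<noteq> l \<longrightarrow> P k \<inter> P l = {}"
    using assms(1) unfolding split3_def by blast+
  show "is_bundle m (P h)" using b assms(2) by blast
  show "is_bundle m (P p)" using b assms(3) by blast
  show "is_bundle m (P q)" using b assms(4) by blast
  show "P h \<inter> P p = {}" using d assms(2,3,5) by blast
  show "P h \<inter> P q = {}" using d assms(2,4,6) by blast
  show "P p \<inter> P q = {}" using d assms(3,4,7) by blast
  have c: "\<forall>k\<in>{1,2,3::nat}. k = h \<or> k = p \<or> k = q" using assms(2-7) by force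
  have "(\<Union>k\<in>{1,2,3}. P k) = P h \<union> P p \<union> P q"
  proof
    show "(\<Union>k\<in>{1,2,3}. P k) \<subseteq> P h \<union> P p \<union> P q"
    proof (rule UN_least)
      fix k :: nat assume "k \<in> {1,2,3}"
      hence "k = h \<or> k = p \<or> k = q" using c by blast
      thus "P k \<subseteq> P h \<union> P p \<union> P q" by blast
    qed
    show "P h \<union> P p \<union> P q \<subseteq> (\<Union>k\<in>{1,2,3}. P k)" using assms(2-4) by blast
  qed
  thus "P h \<union> P p \<union> P q = {0..<m}" using assms unfolding split3_def by simp
qed

lemma nonh_interval:
  assumes m: "0 < m" and b: "is_bundle m S" and g: "g \<notin> S" "g < m"
  shows "\<exists>A B. Suc 0 \<le> A \<and> A \<le> B \<and> B \<le> m \<and> S = seg m g A B"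
proof -
  have e1: "Suc g + (m - 1) = g + m" using m by simp
  have "elem m (Suc g) (m - 1) = (g + m) mod m" unfolding elem_def e1 ..
  also have "\<dots> = g" using g(2) by simp
  finally have "elem m (Suc g) (m - 1) \<notin> S" using g(1) by simp
  then obtain A B where AB: "A \<le> B" "B < m" "S = seg m (Suc g) A B"
    using bundle_interval[OF m b] by blast
  have "S = seg m g (Suc A) (Suc B)" using AB(3) seg_shift1[of m g A B] by simp
  moreover have "Suc 0 \<le> Suc A" "Suc A \<le> Suc B" "Suc B \<le> m" using AB by simp_all
  ultimately show ?thesis by blast
qed

lemma nf_h:
  fixes P :: "nat \<Rightarrow> nat set"
  assumes m: "0 < m" and sp: "split3 m P" and hpq: "h \<in> {1,2,3}" "p \<in> {1,2,3}" "q \<in> {1,2,3}" "h \<noteq> p" "h \<noteq> q" "p \<noteq> q"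
    and ne: "P h \<noteq> {}" and nf: "\<not> {0..<m} \<subseteq> P h"
  shows "\<exists>g x y. x \<le> y \<and> y \<le> m \<and> P h = seg m g 0 x \<and>
    ((P p = seg m g x y \<and> P q = seg m g y m) \<or> (P q = seg m g x y \<and> P p = seg m g y m))"
proof -
  note F = split3_facts[OF sp hpq]
  have sub: "P h \<subseteq> {0..<m}" using F(1) by (simp add: is_bundle_def)
  obtain g where gP: "g \<in> P h" and gn: "(g + m - 1) mod m \<notin> P h"
    using exists_start[OF m sub ne nf] by blast
  have gm: "g < m" using gP sub by auto
  have "elem m g (m - 1) = (g + m - 1) mod m" using m by (simp add: elem_def)
  then obtain A x where Ax: "A \<le> x" "x < m" "P h = seg m g A x"
    using bundle_interval[OF m F(1), of g] gn by auto
  obtain t where t: "A \<le> t" "t < x" "elem m g t = g" using gP Ax(3) unfolding seg_def by auto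
  have "elem m g 0 = g" using gm by (simp add: elem_def)
  hence "t = 0" using elem_inj[OF m, of 0 t 0 g] t Ax by simp
  hence A0: "A = 0" using t by simp
  have gp: "g \<notin> P p" and gq: "g \<notin> P q" using gP F(4,5) by auto
  obtain p1 p2 where pp: "Suc 0 \<le> p1" "p1 \<le> p2" "p2 \<le> m" "P p = seg m g p1 p2"
    using nonh_interval[OF m F(2) gp gm] by auto
  obtain q1 q2 where qq: "Suc 0 \<le> q1" "q1 \<le> q2" "q2 \<le> m" "P q = seg m g q1 q2"
    using nonh_interval[OF m F(3) gq gm] by auto
  have Ph: "P h = seg m g 0 x" using Ax A0 by simp
  have inj: "inj_on (elem m g) {0..<m}" using elem_inj_on[OF m, of g 0] by simp
  have dis: "I \<inter> J = {}" if "elem m g ` I \<inter> elem m g ` J = {}" for I J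
    using that by auto
  have Dhp: "{0..<x} \<inter> {p1..<p2} = {}" by (rule dis) (use F(4) Ph pp(4) in \<open>simp add: seg_def\<close>)
  have Dhq: "{0..<x} \<inter> {q1..<q2} = {}" by (rule dis) (use F(5) Ph qq(4) in \<open>simp add: seg_def\<close>)
  have Dpq: "{p1..<p2} \<inter> {q1..<q2} = {}" by (rule dis) (use F(6) pp(4) qq(4) in \<open>simp add: seg_def\<close>)
  have "elem m g ` ({0..<x} \<union> {p1..<p2} \<union> {q1..<q2}) = elem m g ` {0..<m}"
    using F(7) Ph pp(4) qq(4) seg_full[OF m, of g 0] unfolding seg_def by (simp add: image_Un)
  hence Un: "{0..<x} \<union> {p1..<p2} \<union> {q1..<q2} = {0..<m}"
    by (subst (asm) inj_on_image_eq_iff[OF inj]) (use Ax(2) pp qq in auto)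
  have U2: "{p1..<p2} \<union> {q1..<q2} = {x..<m}"
  proof -
    have "t \<in> {p1..<p2} \<union> {q1..<q2} \<longleftrightarrow> t \<in> {x..<m}" for t
    proof -
      have e: "t \<in> {0..<x} \<union> {p1..<p2} \<union> {q1..<q2} \<longleftrightarrow> t \<in> {0..<m}"
        using arg_cong[where f="\<lambda>S. t \<in> S", OF Un] .
      have d1: "\<not> (t \<in> {0..<x} \<and> t \<in> {p1..<p2})" using Dhp by blast
      have d2: "\<not> (t \<in> {0..<x} \<and> t \<in> {q1..<q2})" using Dhq by blast
      show ?thesis using e d1 d2 by auto
    qed
    thus ?thesis by blast
  qed
  obtain y where y: "x \<le> y" "y \<le> m"
    "({p1..<p2} = {x..<y} \<and> {q1..<q2} = {y..<m}) \<or> ({q1..<q2} = {x..<y} \<and> {p1..<p2} = {y..<m})"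
    using ivl3[OF U2 Dpq] Ax(2) by auto
  have "(P p = seg m g x y \<and> P q = seg m g y m) \<or> (P q = seg m g x y \<and> P p = seg m g y m)"
    using y(3)
  proof
    assume h: "{p1..<p2} = {x..<y} \<and> {q1..<q2} = {y..<m}"
    have "P p = seg m g x y" using pp(4) h unfolding seg_def by simp
    moreover have "P q = seg m g y m" using qq(4) h unfolding seg_def by simp
    ultimately show ?thesis by (rule disjI1[OF conjI])
  next
    assume h: "{q1..<q2} = {x..<y} \<and> {p1..<p2} = {y..<m}"
    have "P q = seg m g x y" using qq(4) h unfolding seg_def by simp
    moreover have "P p = seg m g y m" using pp(4) h unfolding seg_def by simp
    ultimately show ?thesis by (rule disjI2[OF conjI])
  qed
  thus ?thesis using y Ph by blast
qed


lemma nf_full: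
  assumes sp: "split3 m P" and hpq: "h \<in> {1,2,3}" "p \<in> {1,2,3}" "q \<in> {1,2,3}" "h \<noteq> p" "h \<noteq> q" "p \<noteq> q"
    and full: "{0..<m} \<subseteq> P h"
  shows "P h = {0..<m} \<and> P p = {} \<and> P q = {}"
proof -
  note F = split3_facts[OF sp hpq]
  have "P p \<subseteq> {0..<m}" "P q \<subseteq> {0..<m}" "P h \<subseteq> {0..<m}" using F(1-3) by (simp_all add: is_bundle_def)
  thus ?thesis using F(4,5) full by blast
qed

lemma nf_empty:
  assumes m: "0 < m" and sp: "split3 m P" and hpq: "h \<in> {1,2,3}" "a \<in> {1,2,3}" "q \<in> {1,2,3}" "h \<noteq> a" "h \<noteq> q" "a \<noteq> q"
    and ne: "P h \<noteq> {}" and nf: "\<not> {0..<m} \<subseteq> P h" and ae: "P a = {}"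
  shows "\<exists>g x. x \<le> m \<and> P a = seg m g 0 0 \<and> P h = seg m g 0 x \<and> P q = seg m g x m"
proof -
  obtain g x y where xy: "x \<le> y" "y \<le> m" "P h = seg m g 0 x"
    and d: "(P a = seg m g x y \<and> P q = seg m g y m) \<or> (P q = seg m g x y \<and> P a = seg m g y m)"
    using nf_h[OF m sp hpq ne nf] by blast
  have "P q = seg m g x m" using d
  proof
    assume h: "P a = seg m g x y \<and> P q = seg m g y m"
    hence "seg m g x y = {}" using ae by simp
    hence "y = x" using xy by (simp add: seg_empty_iff)
    thus ?thesis using h by simp
  next
    assume h: "P q = seg m g x y \<and> P a = seg m g y m"
    hence "seg m g y m = {}" using ae by simp
    hence "y = m" using xy by (simp add: seg_empty_iff)
    thus ?thesis using h by simp
  qed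
  moreover have "P a = seg m g 0 0" using ae by (simp add: seg_def)
  ultimately show ?thesis using xy by (intro exI[of _ g] exI[of _ x]) simp
qed

lemma split_nf:
  fixes P :: "nat \<Rightarrow> nat set"
  assumes m: "0 < m" and sp: "split3 m P" and a: "a \<in> {1,2,3}"
  shows "\<exists>r x y k2 k3. k2 \<in> {1,2,3} \<and> k3 \<in> {1,2,3} \<and> a \<noteq> k2 \<and> a \<noteq> k3 \<and> k2 \<noteq> k3 \<and>
    x \<le> y \<and> y \<le> m \<and> P a = seg m r 0 x \<and> P k2 = seg m r x y \<and> P k3 = seg m r y m"
proof -
  obtain p q where pq: "p \<in> {1,2,3}" "q \<in> {1,2,3}" "a \<noteq> p" "a \<noteq> q" "p \<noteq> q"
  proof -
    consider "a = 1" | "a = 2" | "a = 3" using a by blast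
    thus ?thesis
    proof cases
      case 1 thus ?thesis using that[of 2 3] by simp
    next
      case 2 thus ?thesis using that[of 1 3] by simp
    next
      case 3 thus ?thesis using that[of 1 2] by simp
    qed
  qed
  note F = split3_facts[OF sp a pq]
  have full0: "seg m 0 0 m = {0..<m}" using seg_full[OF m, of 0 0] by simp
  have emp: "seg m r z z = {}" for r z by (simp add: seg_empty_iff)
  show ?thesis
  proof (cases "{0..<m} \<subseteq> P a")
    case True
    with nf_full[OF sp a pq] have "P a = {0..<m} \<and> P p = {} \<and> P q = {}" by blast
    thus ?thesis using pq full0 emp by (intro exI[of _ 0] exI[of _ m] exI[of _ m] exI[of _ p] exI[of _ q]) (simp add: emp)
  next
    case nfa: False
    show ?thesis
    proof (cases "{0..<m} \<subseteq> P p")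
      case True
      with nf_full[OF sp pq(1) a pq(2) pq(3)[symmetric] pq(5) pq(4)] have "P p = {0..<m} \<and> P a = {} \<and> P q = {}" by blast
      thus ?thesis using pq full0 emp by (intro exI[of _ 0] exI[of _ 0] exI[of _ m] exI[of _ p] exI[of _ q]) (simp add: emp)
    next
      case nfp: False
      show ?thesis
      proof (cases "{0..<m} \<subseteq> P q")
        case True
        with nf_full[OF sp pq(2) a pq(1) pq(4)[symmetric] pq(5)[symmetric] pq(3)] have "P q = {0..<m} \<and> P a = {} \<and> P p = {}" by blast
        thus ?thesis using pq full0 emp by (intro exI[of _ 0] exI[of _ 0] exI[of _ m] exI[of _ q] exI[of _ p]) (simp add: emp)
      next
        case nfq: False
        show ?thesis
        proof (cases "P a = {}")
          case False
          obtain g x y where xy: "x \<le> y" "y \<le> m" "P a = seg m g 0 x"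
            and d: "(P p = seg m g x y \<and> P q = seg m g y m) \<or> (P q = seg m g x y \<and> P p = seg m g y m)"
            using nf_h[OF m sp a pq False nfa] by blast
          from d show ?thesis
          proof
            assume "P p = seg m g x y \<and> P q = seg m g y m"
            thus ?thesis using xy pq by (intro exI[of _ g] exI[of _ x] exI[of _ y] exI[of _ p] exI[of _ q]) simp
          next
            assume "P q = seg m g x y \<and> P p = seg m g y m"
            thus ?thesis using xy pq by (intro exI[of _ g] exI[of _ x] exI[of _ y] exI[of _ q] exI[of _ p]) simp
          qed
        next
          case ae: True
          have "P p \<noteq> {} \<or> P q \<noteq> {}"
          proof (rule ccontr)
            assume "\<not> ?thesis"
            hence "P a \<union> P p \<union> P q = {}" using ae by simp
            thus False using F(7) m by auto
          qed
          thus ?thesis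
          proof
            assume ne: "P p \<noteq> {}"
            obtain g x where "x \<le> m" "P a = seg m g 0 0" "P p = seg m g 0 x" "P q = seg m g x m"
              using nf_empty[OF m sp pq(1) a pq(2) pq(3)[symmetric] pq(5) pq(4) ne nfp ae] by blast
            thus ?thesis using pq by (intro exI[of _ g] exI[of _ 0] exI[of _ x] exI[of _ p] exI[of _ q]) simp
          next
            assume ne: "P q \<noteq> {}"
            obtain g x where "x \<le> m" "P a = seg m g 0 0" "P q = seg m g 0 x" "P p = seg m g x m"
              using nf_empty[OF m sp pq(2) a pq(1) pq(4)[symmetric] pq(5)[symmetric] pq(3) ne nfq ae] by blast
            thus ?thesis using pq by (intro exI[of _ g] exI[of _ 0] exI[of _ x] exI[of _ q] exI[of _ p]) simp
          qed
        qed
      qed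
    qed
  qed
qed



lemma uset_union3:
  assumes "X \<inter> Y = {}" "X \<inter> Z = {}" "Y \<inter> Z = {}" "X \<union> Y \<union> Z = {0..<m}"
  shows "uset w X + uset w Y + uset w Z = uset w {0..<m}"
proof -
  have fin: "finite X" "finite Y" "finite Z" using assms(4) finite_subset[of _ "{0..<m}"] by auto
  have "uset w (X \<union> Y) = uset w X + uset w Y"
    unfolding uset_def by (rule sum.union_disjoint) (use fin assms in auto)
  moreover have "uset w (X \<union> Y \<union> Z) = uset w (X \<union> Y) + uset w Z"
    unfolding uset_def by (rule sum.union_disjoint) (use fin assms in auto)
  ultimately show ?thesis using assms(4) by simp
qed

lemma split_sum:
  assumes "split3 m P" shows "uset w (P 1) + uset w (P 2) + uset w (P 3) = uset w {0..<m}"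
proof -
  note F = split3_facts[OF assms, of 1 2 3]
  show ?thesis using uset_union3[OF F(4-7)] by simp
qed

lemma split_value_le:
  assumes "k \<in> {1,2,3}" shows "split_value w P \<le> uset w (P k)"
  unfolding split_value_def using assms by (intro Min_le) auto

lemma triv_split: "split3 m (\<lambda>k. if k = 1 then {0..<m} else {})"
proof -
  have b0: "is_bundle m {}" by (simp add: is_bundle_def)
  have b1: "is_bundle m {0..<m}"
  proof (cases "m = 0")
    case True thus ?thesis using b0 by simp
  next
    case False
    hence "seg m 0 0 m = {0..<m}" using seg_full[of m 0 0] by simp
    thus ?thesis using seg_bundle[of m 0 0 m] False by simp
  qed
  show ?thesis unfolding split3_def using b0 b1 by auto
qed

lemma split_value_bound:
  assumes "split3 m P" shows "split_value w P \<le> uset w {0..<m} / 3"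
  using split_sum[OF assms, of w] split_value_le[of 1 w P] split_value_le[of 2 w P] split_value_le[of 3 w P]
  by simp

lemma mms_bound: "mms m w \<le> uset w {0..<m} / 3"
  unfolding mms_def
proof (rule cSup_least)
  show "{split_value w P |P. split3 m P} \<noteq> {}" using triv_split by blast
  fix v assume "v \<in> {split_value w P |P. split3 m P}"
  thus "v \<le> uset w {0..<m} / 3" using split_value_bound by blast
qed

lemma mms_nonneg:
  assumes nn: "\<forall>g<m. w g \<ge> 0" shows "0 \<le> mms m w"
proof -
  let ?T = "\<lambda>k::nat. if k = 1 then {0..<m} else ({}::nat set)"
  have "0 \<le> uset w {0..<m}" unfolding uset_def using nn by (intro sum_nonneg) auto
  hence "split_value w ?T = 0" unfolding split_value_def uset_def by simp
  moreover have "split_value w ?T \<le> mms m w" unfolding mms_def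
  proof (rule cSup_upper)
    show "split_value w ?T \<in> {split_value w P |P. split3 m P}" using triv_split by blast
    show "bdd_above {split_value w P |P. split3 m P}"
      unfolding bdd_above_def using split_value_bound by blast
  qed
  ultimately show ?thesis by simp
qed

lemma mms_split_ge:
  assumes "mms_split m w P" "k \<in> {1,2,3}" shows "mms m w \<le> uset w (P k)"
  using assms split_value_le[of k w P] unfolding mms_split_def by simp



lemma rebase:
  assumes m: "0 < m" shows "\<exists>d<m. \<forall>t. elem m r t = elem m s (d + t)"
proof -
  define d where "d = pos m s (r mod m)"
  have "d < m" unfolding d_def using pos_lt[OF m] .
  moreover have "elem m r t = elem m s (d + t)" for t
  proof -
    have "elem m s (d + t) = ((s + d) mod m + t) mod m" unfolding elem_def
      by (simp add: mod_add_left_eq add.assoc)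
    also have "(s + d) mod m = r mod m" using elem_pos[of "r mod m" m s] m unfolding d_def elem_def by simp
    also have "(r mod m + t) mod m = elem m r t" unfolding elem_def by (simp add: mod_add_left_eq)
    finally show ?thesis by simp
  qed
  ultimately show ?thesis by blast
qed

lemma seg_rebase:
  assumes d: "\<forall>t. elem m r t = elem m s (d + t)"
  shows "seg m r A B = seg m s (d + A) (d + B)"
proof
  show "seg m r A B \<subseteq> seg m s (d + A) (d + B)"
  proof
    fix z assume "z \<in> seg m r A B"
    then obtain t where t: "A \<le> t" "t < B" "z = elem m r t" unfolding seg_def by auto
    hence "z = elem m s (d + t)" using d by simp
    thus "z \<in> seg m s (d + A) (d + B)" unfolding seg_def using t by auto
  qed
next
  show "seg m s (d + A) (d + B) \<subseteq> seg m r A B"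
  proof
    fix z assume "z \<in> seg m s (d + A) (d + B)"
    then obtain t where t: "d + A \<le> t" "t < d + B" "z = elem m s t" unfolding seg_def by auto
    have "t = d + (t - d)" using t by simp
    hence "z = elem m r (t - d)" using d t(3) by metis
    moreover have "t - d \<in> {A..<B}" using t by auto
    ultimately show "z \<in> seg m r A B" unfolding seg_def by blast
  qed
qed

lemma uset_mono:
  assumes "S \<subseteq> T" "T \<subseteq> {0..<m}" "\<forall>g<m. w g \<ge> 0"
  shows "uset w S \<le> uset w T"
  unfolding uset_def
  by (rule sum_mono2) (use assms finite_subset[of T "{0..<m}"] in auto)

lemma elem_eq_cases:
  assumes m: "0 < m" and "t1 < m" "t < m + m" "elem m s t1 = elem m s t"
  shows "t1 = t \<or> t1 + m = t"
proof (cases "t < m")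
  case True thus ?thesis using elem_inj[OF m, of 0 t1 t s] assms by simp
next
  case False
  hence "elem m s (t - m) = elem m s t" using elem_shift[of m s "t - m"] by simp
  hence "t1 = t - m" using elem_inj[OF m, of 0 t1 "t - m" s] assms False by simp
  thus ?thesis using False by simp
qed


theorem lemma4p11:
  fixes m :: nat and u :: "nat \<Rightarrow> nat \<Rightarrow> real" and c :: real
    and i j :: nat and P Q :: "nat \<Rightarrow> nat set" and a b :: nat
  assumes nonneg: "\<forall>k\<in>{1,2,3}. \<forall>g<m. u k g \<ge> 0"
    and c_pos: "0 < c" and c_le: "c \<le> 1"
    and ij: "i \<in> {1,2,3}" "j \<in> {1,2,3}" "i \<noteq> j"
    and P: "mms_split m (u i) P" and a: "a \<in> {1,2,3}"
    and Q: "mms_split m (u j) Q" and b: "b \<in> {1,2,3}"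
    and inter: "uset (u i) (P a \<inter> Q b) \<ge> c * mms m (u i)"
  shows "\<exists>A. sufficient_alloc m u c A"
proof -
  obtain k where k: "k \<in> {1,2,3}" "k \<noteq> i" "k \<noteq> j"
  proof -
    have "\<exists>k\<in>{1,2,3::nat}. k \<noteq> i \<and> k \<noteq> j" using ij by auto
    thus ?thesis using that by blast
  qed
  have ik: "i \<noteq> k" and jk: "j \<noteq> k" using k by auto
  have nnI: "\<forall>g<m. u i g \<ge> 0" and nnJ: "\<forall>g<m. u j g \<ge> 0" and nnK: "\<forall>g<m. u k g \<ge> 0"
    using nonneg ij k by auto
  define Mi where "Mi = mms m (u i)"
  define Mj where "Mj = mms m (u j)"
  define Mk where "Mk = mms m (u k)"
  have Mi0: "0 \<le> Mi" and Mj0: "0 \<le> Mj" and Mk0: "0 \<le> Mk"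
    unfolding Mi_def Mj_def Mk_def using mms_nonneg nnI nnJ nnK by auto
  have cMi: "c * Mi \<le> Mi" using mult_right_mono[OF c_le Mi0] by simp
  have cMj: "c * Mj \<le> Mj" using mult_right_mono[OF c_le Mj0] by simp
  have goal: "\<exists>X. split3 m X \<and> uset (u i) (X i) \<ge> c * Mi \<and> uset (u j) (X j) \<ge> c * Mj \<and> uset (u k) (X k) \<ge> c * Mk"
  proof (cases "m = 0")
    case True
    have sp: "split3 m (\<lambda>_. {})" using True by (simp add: split3_def is_bundle_def)
    have "M \<le> 0 \<Longrightarrow> c * M \<le> 0" for M using c_pos by (simp add: mult_nonneg_nonpos)
    moreover have "Mi \<le> 0" "Mj \<le> 0" "Mk \<le> 0" unfolding Mi_def Mj_def Mk_def
      using mms_bound[of m] True by (simp_all add: uset_def)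
    ultimately show ?thesis using sp by (intro exI[of _ "\<lambda>_. {}"]) (simp add: uset_def)
  next
    case False
    hence m: "0 < m" by simp
    have Qs: "split3 m Q" and Ps: "split3 m P" using P Q by (auto simp: mms_split_def)
    obtain s e f qy qx where qyx: "qy \<in> {1,2,3}" "qx \<in> {1,2,3}" "b \<noteq> qy" "b \<noteq> qx" "qy \<noteq> qx"
      and ef: "e \<le> f" and fm: "f \<le> m"
      and Qb: "Q b = seg m s 0 e" and Qy: "Q qy = seg m s e f" and Qx: "Q qx = seg m s f m"
      using split_nf[OF m Qs b] by blast
    obtain r X Y p2 p3 where p23: "p2 \<in> {1,2,3}" "p3 \<in> {1,2,3}" "a \<noteq> p2" "a \<noteq> p3" "p2 \<noteq> p3"
      and XY: "X \<le> Y" "Y \<le> m"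
      and Pa0: "P a = seg m r 0 X" and P20: "P p2 = seg m r X Y" and P30: "P p3 = seg m r Y m"
      using split_nf[OF m Ps a] by blast
    obtain d where dm: "d < m" and dd: "\<forall>t. elem m r t = elem m s (d + t)"
      using rebase[OF m] by blast
    have Pa: "P a = seg m s d (d + X)" using Pa0 seg_rebase[OF dd] by simp
    have P2: "P p2 = seg m s (d + X) (d + Y)" using P20 seg_rebase[OF dd] by simp
    have P3: "P p3 = seg m s (d + Y) (d + m)" using P30 seg_rebase[OF dd] by simp
    have hP2: "Fv m (u i) s (d + X) (d + Y) \<ge> Mi"
      using mms_split_ge[OF P p23(1)] uset_seg[OF m, of "d + Y" "d + X" "u i" s] XY P2 unfolding Mi_def by simp
    have hP3: "Fv m (u i) s (d + Y) (d + m) \<ge> Mi"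
      using mms_split_ge[OF P p23(2)] uset_seg[OF m, of "d + m" "d + Y" "u i" s] XY P3 unfolding Mi_def by simp
    have hj1: "Fv m (u j) s e f \<ge> c * Mj"
      using mms_split_ge[OF Q qyx(1)] uset_seg[OF m, of f e "u j" s] ef fm Qy cMj unfolding Mj_def by simp
    have hj2: "Fv m (u j) s f m \<ge> c * Mj"
      using mms_split_ge[OF Q qyx(2)] uset_seg[OF m, of m f "u j" s] ef fm Qx cMj unfolding Mj_def by simp
    have hk: "Fv m (u k) s A (A + m) \<ge> 3 * Mk" for A
      using Fv_total[OF m, of "u k" s A] mms_bound[of m "u k"] unfolding Mk_def by simp
    have hD: "uset (u i) (P a \<inter> Q b) \<ge> c * Mi" using inter unfolding Mi_def .
    have memD: "\<exists>t1 t2. t1 < e \<and> t2 < X \<and> z = elem m s t1 \<and> elem m s t1 = elem m s (d + t2)"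
      if zD: "z \<in> P a \<inter> Q b" for z
    proof -
      obtain x where x: "d \<le> x" "x < d + X" "z = elem m s x" using zD unfolding Pa seg_def by auto
      obtain t1 where t1: "t1 < e" "z = elem m s t1" using zD unfolding Qb seg_def by auto
      have "x = d + (x - d)" using x by simp
      hence "elem m s t1 = elem m s (d + (x - d))" using x t1 by metis
      moreover have "x - d < X" using x by simp
      ultimately show ?thesis using t1 by blast
    qed
    have Dbound: "uset (u i) (P a \<inter> Q b) \<le> Fv m (u i) s \<alpha> \<beta>"
      if "P a \<inter> Q b \<subseteq> seg m s \<alpha> \<beta>" "\<beta> \<le> \<alpha> + m" for \<alpha> \<beta>
      using uset_mono[OF that(1) seg_sub[OF m] nnI] uset_seg[OF m that(2)] by simp
    have main: "\<exists>Z. split3 m Z \<and> uset (u i) (Z i) \<ge> c * Mi \<and> uset (u j) (Z j) \<ge> c * Mj \<and> uset (u k) (Z k) \<ge> c * Mk"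
      if h: "\<alpha> \<le> \<beta>" "\<beta> \<le> e" "\<beta> \<le> \<gamma>" "\<gamma> \<le> m + \<alpha>" "Fv m (u i) s \<alpha> \<beta> \<ge> c * Mi"
        "(f \<le> \<gamma> \<and> Fv m (u i) s \<gamma> (m + \<alpha>) \<ge> c * Mi) \<or> (\<gamma> \<le> f \<and> Fv m (u i) s \<beta> \<gamma> \<ge> c * Mi)"
      for \<alpha> \<beta> \<gamma>
      by (rule main_alloc[where \<alpha>=\<alpha> and \<beta>=\<beta> and \<gamma>=\<gamma> and e=e and f=f and s=s,
            OF m ij(1) ij(2) k(1) ij(3) ik jk nonneg h(1) h(2) ef fm h(3) h(4) h(5) hj1 hj2 hk Mk0 c_le h(6)])
    have monoI: "Fv m (u i) s A B \<le> Fv m (u i) s A' B'" if "A' \<le> A" "B \<le> B'" for A B A' B'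
      using Fv_mono[OF m nnI that] .
    show ?thesis
    proof (cases "d + X \<le> m")
      case nw: True
      show ?thesis
      proof (cases "e \<le> d")
        case True
        have "P a \<inter> Q b \<subseteq> seg m s 0 0"
        proof
          fix z assume "z \<in> P a \<inter> Q b"
          then obtain t1 t2 where t: "t1 < e" "t2 < X" "elem m s t1 = elem m s (d + t2)" using memD by blast
          have "t1 = d + t2 \<or> t1 + m = d + t2" using elem_eq_cases[OF m _ _ t(3)] t ef fm nw XY by linarith
          hence False using t True nw by linarith
          thus "z \<in> seg m s 0 0" ..
        qed
        hence "c * Mi \<le> 0" using Dbound[of 0 0] hD by (simp add: Fv_def)
        hence z: "Fv m (u i) s 0 0 \<ge> c * Mi" by (simp add: Fv_def)
        show ?thesis by (rule main[of 0 0 0]) (use z in simp_all)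
      next
        case False
        define \<beta> where "\<beta> = min (d + X) e"
        have "P a \<inter> Q b \<subseteq> seg m s d \<beta>"
        proof
          fix z assume "z \<in> P a \<inter> Q b"
          then obtain t1 t2 where t: "t1 < e" "t2 < X" "z = elem m s t1" "elem m s t1 = elem m s (d + t2)" using memD by blast
          have "t1 = d + t2 \<or> t1 + m = d + t2" using elem_eq_cases[OF m _ _ t(4)] t ef fm nw XY by linarith
          hence "t1 = d + t2" using nw t by linarith
          thus "z \<in> seg m s d \<beta>" unfolding seg_def \<beta>_def using t by auto
        qed
        moreover have "\<beta> \<le> d + m" using \<beta>_def XY by simp
        ultimately have hi: "Fv m (u i) s d \<beta> \<ge> c * Mi" using Dbound[of d \<beta>] hD by force
        show ?thesis
        proof (rule main[of d \<beta> "d + Y"])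
          show "d \<le> \<beta>" "\<beta> \<le> e" "\<beta> \<le> d + Y" "d + Y \<le> m + d" using False XY \<beta>_def by auto
          show "c * Mi \<le> Fv m (u i) s d \<beta>" by (rule hi)
          show "(f \<le> d + Y \<and> c * Mi \<le> Fv m (u i) s (d + Y) (m + d)) \<or> (d + Y \<le> f \<and> c * Mi \<le> Fv m (u i) s \<beta> (d + Y))"
          proof (cases "f \<le> d + Y")
            case True thus ?thesis using hP3 cMi by (simp add: add.commute)
          next
            case F: False
            have "Fv m (u i) s (d + X) (d + Y) \<le> Fv m (u i) s \<beta> (d + Y)" using monoI \<beta>_def by simp
            thus ?thesis using F hP2 cMi by simp
          qed
        qed
      qed
    next
      case wr: False
      have hP2': "Fv m (u i) s (d + X - m) (d + Y - m) \<ge> Mi"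
        using hP2 Fv_shift[of m "u i" s "d + X - m" "d + Y - m"] wr XY by simp
      have hP3': "Fv m (u i) s (d + Y - m) d \<ge> Mi"
        using hP3 Fv_shift[of m "u i" s "d + Y - m" d] wr XY by (simp add: add.commute)
      show ?thesis
      proof (cases "e \<le> d")
        case True
        define \<beta> where "\<beta> = min (d + X - m) e"
        have "P a \<inter> Q b \<subseteq> seg m s 0 \<beta>"
        proof
          fix z assume "z \<in> P a \<inter> Q b"
          then obtain t1 t2 where t: "t1 < e" "t2 < X" "z = elem m s t1" "elem m s t1 = elem m s (d + t2)" using memD by blast
          have "t1 = d + t2 \<or> t1 + m = d + t2" using elem_eq_cases[OF m _ _ t(4)] t ef fm dm XY by linarith
          hence "t1 + m = d + t2" using True t by linarith
          hence "t1 \<in> {0..<\<beta>}" unfolding \<beta>_def using t by auto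
          thus "z \<in> seg m s 0 \<beta>" unfolding seg_def using t(3) by blast
        qed
        moreover have "\<beta> \<le> 0 + m" using \<beta>_def ef fm by simp
        ultimately have hi: "Fv m (u i) s 0 \<beta> \<ge> c * Mi" using Dbound[of 0 \<beta>] hD by force
        show ?thesis
        proof (rule main[of 0 \<beta> "d + Y - m"])
          show "0 \<le> \<beta>" "\<beta> \<le> e" "\<beta> \<le> d + Y - m" "d + Y - m \<le> m + 0" using XY dm \<beta>_def by auto
          show "c * Mi \<le> Fv m (u i) s 0 \<beta>" by (rule hi)
          show "(f \<le> d + Y - m \<and> c * Mi \<le> Fv m (u i) s (d + Y - m) (m + 0)) \<or> (d + Y - m \<le> f \<and> c * Mi \<le> Fv m (u i) s \<beta> (d + Y - m))"
          proof (cases "f \<le> d + Y - m")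
            case True
            have "Fv m (u i) s (d + Y - m) d \<le> Fv m (u i) s (d + Y - m) (m + 0)" using monoI dm by simp
            thus ?thesis using True hP3' cMi by simp
          next
            case F: False
            have "Fv m (u i) s (d + X - m) (d + Y - m) \<le> Fv m (u i) s \<beta> (d + Y - m)" using monoI \<beta>_def by simp
            thus ?thesis using F hP2' cMi by simp
          qed
        qed
      next
        case False
        show ?thesis
        proof (rule main[of "d + X - m" "d + Y - m" d])
          show "d + X - m \<le> d + Y - m" "d + Y - m \<le> e" "d + Y - m \<le> d" "d \<le> m + (d + X - m)"
            using XY False wr by auto
          show "c * Mi \<le> Fv m (u i) s (d + X - m) (d + Y - m)" using hP2' cMi by simp
          show "(f \<le> d \<and> c * Mi \<le> Fv m (u i) s d (m + (d + X - m))) \<or> (d \<le> f \<and> c * Mi \<le> Fv m (u i) s (d + Y - m) d)"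
            using hP3' cMi False ef by simp
        qed
      qed
    qed
  qed
  then obtain Z where Z: "split3 m Z" "uset (u i) (Z i) \<ge> c * Mi" "uset (u j) (Z j) \<ge> c * Mj" "uset (u k) (Z k) \<ge> c * Mk"
    by blast
  have all: "\<forall>n\<in>{1,2,3}. n = i \<or> n = j \<or> n = k" using ij k by auto
  have "sufficient_alloc m u c Z"
    unfolding sufficient_alloc_def
  proof (intro conjI ballI)
    show "split3 m Z" by (rule Z(1))
    fix n :: nat assume "n \<in> {1,2,3}"
    hence "n = i \<or> n = j \<or> n = k" using all by blast
    thus "c * mms m (u n) \<le> uset (u n) (Z n)" using Z unfolding Mi_def Mj_def Mk_def by auto
  qed
  thus ?thesis by blast
qed


end
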